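(* Let $m,N,N_0\in\mathbb{N}$, $A\in\mathbb{R}^{N\times N_0}$, $B\in\mathbb{R}^{m\times N}$ and $z\in\mathbb{R}^N$. Suppose $R=\{\alpha^q,\alpha^{q+1},\dots,\alpha^{q+r-1}\}\subset\mathbb{R}^{N_0}$ satisfies $|R|\geq N+1$, the sequence $(\alpha^k_1)_{k=q}^{q+r-1}$ is strictly decreasing, and $\alpha^k_j=0$ for all $j>1$ and all $k$. Then there exist $C\in\mathbb{R}^{m\times N_0}$, $v\in\mathbb{R}^m$ and a set $\mathcal{S}\subseteq R$ of the form $\mathcal{S}=\{\alpha^s,\alpha^{s+1},\dots,\alpha^{s+t-1}\}$ (consecutive indices) with $|\mathcal{S}|\geq |R|/(N+1)$ such that $B\rho(A\alpha+z)=C\alpha+v$ for all $\alpha\in\mathcal{S}$.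
   Context: $\rho(t)=\max\{0,t\}$, applied coordinatewise to vectors. *)

theory Defs
  imports Main Complex_Main
begin

text \<open>Vectors in R^n are represented as functions nat => real (coordinates 0..n-1,
  0-indexed); a k x n matrix is a function nat => nat => real (entries i<k, j<n).\<close>

definition relu :: "real \<Rightarrow> real" where
  "relu t = max 0 t"

definition mat_vec :: "nat \<Rightarrow> (nat \<Rightarrow> nat \<Rightarrow> real) \<Rightarrow> (nat \<Rightarrow> real) \<Rightarrow> (nat \<Rightarrow> real)" where
  "mat_vec n M x = (\<lambda>i. \<Sum>j<n. M i j * x j)"

end

theory Submission
  imports Defs
begin

lemma blocks:
  fixes N :: nat
  shows "finite D \<Longrightarrow> card D \<le> N \<Longrightarrow> D \<subseteq> {q<..<q+r} \<Longrightarrow>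
    \<exists>s t. q \<le> s \<and> s+t \<le> q+r \<and> r \<le> t*(N+1) \<and> (\<forall>d\<in>D. \<not>(s<d \<and> d<s+t))"
proof (induction N arbitrary: D r)
  case 0
  then have "D = {}" by auto
  show ?case apply (rule exI[of _ q]) apply (rule exI[of _ r]) using \<open>D = {}\<close> by auto
next
  case (Suc N)
  show ?case
  proof (cases "D = {}")
    case True
    show ?thesis apply (rule exI[of _ q]) apply (rule exI[of _ r]) using True by auto
  next
    case False
    define d where "d = Max D"
    have dD: "d \<in> D" using False Suc.prems d_def by simp
    have dmax: "\<And>x. x \<in> D \<Longrightarrow> x \<le> d" using Suc.prems d_def by simp
    have drange: "q < d" "d < q + r" using dD Suc.prems by auto
    define D' where "D' = D - {d}"
    have "card D' \<le> N" using Suc.prems dD D'_def by (simp add: card_Diff_singleton)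
    moreover have "D' \<subseteq> {q<..<q+(d-q)}" using Suc.prems dmax D'_def drange
      by fastforce
    moreover have "finite D'" using Suc.prems D'_def by simp
    ultimately obtain s t where st: "q \<le> s" "s+t \<le> q+(d-q)" "d-q \<le> t*(N+1)"
      "\<forall>x\<in>D'. \<not>(s<x \<and> x<s+t)" using Suc.IH by blast
    show ?thesis
    proof (cases "r \<le> (q+r-d)*(Suc N+1)")
      case True
      show ?thesis
        apply (rule exI[of _ d]) apply (rule exI[of _ "q+r-d"])
        using True drange dmax by fastforce
    next
      case False
      define e where "e = d - q"
      have qre: "q+r-d = r-e" using drange e_def by simp
      have r1: "(r - e)*(N+2) < r" using False unfolding qre by simp
      have er: "e \<le> r" using drange e_def by simp
      have "r*(N+2) < r + e*(N+2)" using r1 er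
        by (simp add: diff_mult_distrib)
      then have "r*(N+1) < e*(N+2)" by simp
      also have "\<dots> \<le> t*(N+1)*(N+2)" using st(3) e_def mult_le_mono1 by (metis mult.assoc)
      finally have "r*(N+1) < (t*(N+2))*(N+1)" by (metis mult.assoc mult.commute)
      then have "r < t*(N+2)" by (meson mult_less_cancel2)
      show ?thesis
        apply (rule exI[of _ s]) apply (rule exI[of _ t])
        using \<open>r < t*(N+2)\<close> st drange D'_def by auto
    qed
  qed
qed


lemma sum_first:
  fixes M a :: "nat \<Rightarrow> real"
  assumes "1 \<le> n" "\<And>j. 1 \<le> j \<Longrightarrow> j < n \<Longrightarrow> a j = 0"
  shows "(\<Sum>j<n. M j * a j) = M 0 * a 0"
proof -
  have "(\<Sum>j<n. M j * a j) = M 0 * a 0 + (\<Sum>j\<in>{..<n}-{0}. M j * a j)"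
    using assms(1) by (subst sum.remove[of _ 0]) auto
  also have "(\<Sum>j\<in>{..<n}-{0}. M j * a j) = 0"
    using assms(2) by (intro sum.neutral) auto
  finally show ?thesis by simp
qed

theorem lemma5p5:
  fixes m N N0 q r :: nat
    and A B :: "nat \<Rightarrow> nat \<Rightarrow> real"
    and z :: "nat \<Rightarrow> real"
    and alpha :: "nat \<Rightarrow> nat \<Rightarrow> real"
  assumes "1 \<le> N0"
    and "card (alpha ` {q..<q+r}) \<ge> N + 1"
    and "\<And>k l. q \<le> k \<Longrightarrow> k < l \<Longrightarrow> l < q + r \<Longrightarrow> alpha l 0 < alpha k 0"
    and "\<And>k j. q \<le> k \<Longrightarrow> k < q + r \<Longrightarrow> 1 \<le> j \<Longrightarrow> j < N0 \<Longrightarrow> alpha k j = 0"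
  shows "\<exists>C :: nat \<Rightarrow> nat \<Rightarrow> real. \<exists>v :: nat \<Rightarrow> real. \<exists>s t :: nat.
           q \<le> s \<and> s + t \<le> q + r \<and>
           real (card (alpha ` {s..<s+t})) \<ge> real (card (alpha ` {q..<q+r})) / real (N + 1) \<and>
           (\<forall>a \<in> alpha ` {s..<s+t}. \<forall>i<m.
              mat_vec N B (\<lambda>l. relu (mat_vec N0 A a l + z l)) i = mat_vec N0 C a i + v i)"
proof -
  have injg: "inj_on alpha {s..<s+t}" if "q \<le> s" "s+t \<le> q+r" for s t
  proof (rule inj_onI)
    fix x y assume xy: "x \<in> {s..<s+t}" "y \<in> {s..<s+t}" "alpha x = alpha y"
    show "x = y"
    proof (rule ccontr)
      assume "x \<noteq> y"
      then have "x < y \<or> y < x" by arith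
      then show False using assms(3)[of x y] assms(3)[of y x] xy that by auto
    qed
  qed
  have cardg: "card (alpha ` {s..<s+t}) = t" if "q \<le> s" "s+t \<le> q+r" for s t
    using injg[OF that] by (simp add: card_image)
  define P where "P l k = (A l 0 * alpha k 0 + z l \<ge> 0)" for l k
  define Dl where "Dl l = {k \<in> {q<..<q+r}. P l k \<noteq> P l (k-1)}" for l
  define D where "D = (\<Union>l\<in>{..<N}. Dl l)"
  have Dl_card: "card (Dl l) \<le> 1" for l
  proof -
    have mono: "(\<forall>i j. q \<le> i \<longrightarrow> i \<le> j \<longrightarrow> j < q+r \<longrightarrow> P l j \<longrightarrow> P l i) \<or>
                (\<forall>i j. q \<le> i \<longrightarrow> i \<le> j \<longrightarrow> j < q+r \<longrightarrow> P l i \<longrightarrow> P l j)"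
    proof (cases "A l 0 \<ge> 0")
      case True
      have "A l 0 * alpha j 0 \<le> A l 0 * alpha i 0" if "q \<le> i" "i \<le> j" "j < q+r" for i j
      proof (cases "i = j")
        case False
        then have "alpha j 0 < alpha i 0" using assms(3)[of i j] that by auto
        then show ?thesis using True by (simp add: mult_left_mono)
      qed simp
      then show ?thesis unfolding P_def by force
    next
      case False
      have "A l 0 * alpha i 0 \<le> A l 0 * alpha j 0" if "q \<le> i" "i \<le> j" "j < q+r" for i j
      proof (cases "i = j")
        case False
        then have "alpha j 0 < alpha i 0" using assms(3)[of i j] that by auto
        then show ?thesis using \<open>\<not> A l 0 \<ge> 0\<close> by (simp add: mult_left_mono_neg)
      qed simp
      then show ?thesis unfolding P_def by force
    qed
    have "x = y" if "x \<in> Dl l" "y \<in> Dl l" for x y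
    proof (rule ccontr)
      assume "x \<noteq> y"
      then consider "x < y" | "y < x" by arith
      then show False
      proof cases
        case 1
        have r: "q \<le> x - 1" "x - 1 \<le> x" "x \<le> y - 1" "y - 1 \<le> y" "y < q + r"
          using that 1 unfolding Dl_def by auto
        have "P l x \<noteq> P l (x-1)" "P l y \<noteq> P l (y-1)" using that unfolding Dl_def by auto
        moreover have "q \<le> x" "x \<le> y - 1" "y-1 < q+r" "q \<le> y-1" "x < q+r" using r by auto
        ultimately show False using mono r by meson
      next
        case 2
        have r: "q \<le> y - 1" "y - 1 \<le> y" "y \<le> x - 1" "x - 1 \<le> x" "x < q + r"
          using that 2 unfolding Dl_def by auto
        have "P l x \<noteq> P l (x-1)" "P l y \<noteq> P l (y-1)" using that unfolding Dl_def by auto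
        moreover have "q \<le> y" "y \<le> x - 1" "x-1 < q+r" "q \<le> x-1" "y < q+r" using r by auto
        ultimately show False using mono r by meson
      qed
    qed
    moreover have "finite (Dl l)" unfolding Dl_def by simp
    ultimately show ?thesis using card_le_Suc0_iff_eq[of "Dl l"] by (simp add: One_nat_def)
  qed
  have finD: "finite D" unfolding D_def Dl_def by auto
  have "card D \<le> (\<Sum>l<N. card (Dl l))" unfolding D_def by (rule card_UN_le) simp
  also have "\<dots> \<le> (\<Sum>l<N. 1)" by (intro sum_mono Dl_card)
  finally have cardD: "card D \<le> N" by simp
  have Dsub: "D \<subseteq> {q<..<q+r}" unfolding D_def Dl_def by auto
  obtain s t where st: "q \<le> s" "s+t \<le> q+r" "r \<le> t*(N+1)" "\<forall>d\<in>D. \<not>(s<d \<and> d<s+t)"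
    using blocks[OF finD cardD Dsub] by blast
  have const: "\<forall>l<N. P l (s+j) = P l s" if "j < t" for j
    using that
  proof (induction j)
    case (Suc j)
    have "s + Suc j \<notin> D" using st(4) Suc.prems by auto
    moreover have "s + Suc j \<in> {q<..<q+r}" using st Suc.prems by auto
    ultimately have "\<forall>l<N. P l (s + Suc j) = P l (s+j)"
      unfolding D_def Dl_def by auto
    then show ?case using Suc by auto
  qed simp
  define C :: "nat \<Rightarrow> nat \<Rightarrow> real" where "C i j = (if j = 0 then (\<Sum>l<N. B i l * (if P l s then A l 0 else 0)) else 0)" for i j
  define v where "v i = (\<Sum>l<N. B i l * (if P l s then z l else 0))" for i
  have main: "mat_vec N B (\<lambda>l. relu (mat_vec N0 A a l + z l)) i = mat_vec N0 C a i + v i"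
    if aS: "a \<in> alpha ` {s..<s+t}" for a i
  proof -
    obtain k where k: "k \<in> {s..<s+t}" "a = alpha k" using aS by blast
    obtain j where j: "k = s + j" "j < t" using k by (metis add_diff_inverse_nat atLeastLessThan_iff
          nat_add_left_cancel_less not_less)
    have a0: "\<And>jj. 1 \<le> jj \<Longrightarrow> jj < N0 \<Longrightarrow> a jj = 0" using k st assms(4) by auto
    have ma: "mat_vec N0 A a l = A l 0 * a 0" for l
      unfolding mat_vec_def using sum_first[OF assms(1) a0] by simp
    have mc: "mat_vec N0 C a i = C i 0 * a 0"
      unfolding mat_vec_def using sum_first[OF assms(1) a0] by simp
    have "mat_vec N B (\<lambda>l. relu (mat_vec N0 A a l + z l)) i
        = (\<Sum>l<N. B i l * (if P l s then A l 0 * a 0 + z l else 0))"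
      unfolding mat_vec_def[of N B]
    proof (rule sum.cong[OF refl])
      fix l assume "l \<in> {..<N}"
      then have pk: "P l k = P l s" using const j by auto
      have "relu (mat_vec N0 A a l + z l) = (if P l s then A l 0 * a 0 + z l else 0)"
        unfolding ma using pk k(2) by (auto simp add: relu_def P_def max_def)
      then show "B i l * relu (mat_vec N0 A a l + z l) = B i l * (if P l s then A l 0 * a 0 + z l else 0)"
        by simp
    qed
    also have "\<dots> = (\<Sum>l<N. B i l * (if P l s then A l 0 else 0) * a 0 + B i l * (if P l s then z l else 0))"
      by (rule sum.cong) (auto simp: algebra_simps)
    also have "\<dots> = C i 0 * a 0 + v i"
      unfolding C_def v_def by (simp add: sum.distrib sum_distrib_right)
    finally show ?thesis using mc by simp
  qed
  have cr: "card (alpha ` {q..<q+r}) = r" using cardg[of q r] by simp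
  have ct: "card (alpha ` {s..<s+t}) = t" using cardg st by simp
  have "real r \<le> real t * real (N+1)" using st(3) by (metis of_nat_le_iff of_nat_mult)
  then have "real r / real (N+1) \<le> real t" by (simp add: divide_le_eq)
  then show ?thesis
    apply (rule_tac x=C in exI, rule_tac x=v in exI, rule_tac x=s in exI, rule_tac x=t in exI)
    using st(1,2) cr ct main by simp
qed

end
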